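(* Let $n\ge 6$ be even. Then the largest $3\cdot|E_{n-2}|$ elements of $E_n$ are exactly the elements of $$\{x+2^{n-1}: x\in E_{n-2}\}\cup\{x+5\cdot 2^{n-3}: x\in E_{n-2}\}\cup\{x+3\cdot 2^{n-2}: x\in E_{n-2}\},$$ and in increasing order they consist of the elements of $E_{n-2}$ shifted by $2^{n-1}$, followed by those shifted by $5\cdot2^{n-3}$, followed by those shifted by $3\cdot 2^{n-2}$ (the last block ending at $M_n=2^n-1$).
   Context: Let $D$ (OEIS A036991) be the set of nonnegative integers $m$ such that, reading the binary expansion of $m$ from the least significant bit to the most significant bit, at every point the number of 1's read so far is at least the number of 0's read so far. For $n\ge1$ let $M_n=2^n-1$ and let the $n$-level be $E_n=D\cap(M_{n-1},M_n]$, i.e. the elements of $D$ whose binary expansion has exactly $n$ digits. *)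

theory Defs
  imports Main
begin

fun bin_digits :: "nat \<Rightarrow> nat list" where
  "bin_digits m = (if m = 0 then [] else m mod 2 # bin_digits (m div 2))"

text \<open>The set D (OEIS A036991): reading from the least significant bit, every prefix
has at least as many 1s as 0s.\<close>
definition inD :: "nat \<Rightarrow> bool" where
  "inD m \<longleftrightarrow> (\<forall>k \<le> length (bin_digits m).
      length (filter (\<lambda>d. d = 0) (take k (bin_digits m)))
        \<le> length (filter (\<lambda>d. d = 1) (take k (bin_digits m))))"

definition Mn :: "nat \<Rightarrow> nat" where
  "Mn n = 2 ^ n - 1"

definition E :: "nat \<Rightarrow> nat set" where
  "E n = {m. inD m \<and> Mn (n - 1) < m \<and> m \<le> Mn n}"

end

theory Submission
  imports Defs
begin

declare bin_digits.simps[simp del]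

fun w :: "nat \<Rightarrow> nat \<Rightarrow> nat list" where
  "w 0 m = []"
| "w (Suc j) m = m mod 2 # w j (m div 2)"

definition c0 :: "nat list \<Rightarrow> nat" where "c0 xs = length (filter (\<lambda>d. d = 0) xs)"
definition c1 :: "nat list \<Rightarrow> nat" where "c1 xs = length (filter (\<lambda>d. d = 1) xs)"
definition Q :: "nat list \<Rightarrow> bool" where
  "Q xs \<longleftrightarrow> (\<forall>k \<le> length xs. c0 (take k xs) \<le> c1 (take k xs))"

lemma inD_Q: "inD m = Q (bin_digits m)"
  unfolding inD_def Q_def c0_def c1_def by simp

lemma bd_w: "2^l \<le> m \<Longrightarrow> m < 2^(Suc l) \<Longrightarrow> bin_digits m = w (Suc l) m"
proof (induction l arbitrary: m)
  case 0
  then have "m = 1" by simp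
  then show ?case by (subst bin_digits.simps) (simp add: bin_digits.simps)
next
  case (Suc l)
  have "2^l \<le> m div 2" using Suc.prems div_le_mono[of "2*2^l" m 2] by simp
  moreover have "m div 2 < 2^(Suc l)" using Suc.prems by (intro less_mult_imp_div_less) (simp add: mult.commute)
  ultimately have "bin_digits (m div 2) = w (Suc l) (m div 2)" using Suc.IH by blast
  moreover have "m \<noteq> 0" using Suc.prems by (metis le_zero_eq power_not_zero zero_neq_numeral)
  ultimately show ?case by (subst bin_digits.simps) simp
qed

lemma w_split: "a < 2^j \<Longrightarrow> w (j+l) (a + 2^j*b) = w j a @ w l b"
proof (induction j arbitrary: a)
  case 0
  then show ?case by simp
next
  case (Suc j)
  have m: "(a + 2^(Suc j)*b) mod 2 = a mod 2" by (simp add: mult.assoc)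
  have d: "(a + 2^(Suc j)*b) div 2 = a div 2 + 2^j*b" by simp
  have "a div 2 < 2^j" using Suc.prems by (intro less_mult_imp_div_less) (simp add: mult.commute)
  then show ?case using Suc.IH m d by simp
qed

lemma c01_w: "c0 (w j a) + c1 (w j a) = j"
  by (induction j arbitrary: a) (auto simp: c0_def c1_def)

lemma Q_snoc: "Q (xs @ [d]) \<longleftrightarrow> Q xs \<and> c0 (xs @ [d]) \<le> c1 (xs @ [d])"
  unfolding Q_def
  by (auto simp: le_Suc_eq all_conj_distrib)

lemma c_snoc[simp]: "c0 (xs @ [0]) = Suc (c0 xs)" "c1 (xs @ [0]) = c1 xs"
  "c0 (xs @ [1]) = c0 xs" "c1 (xs @ [1]) = Suc (c1 xs)"
  by (simp_all add: c0_def c1_def)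

lemma w3: "w 3 5 = [1,0,1]" "w 3 6 = [0,1,1]" "w 3 7 = [1,1,1]"
  by (simp_all add: numeral_3_eq_3)

lemma key:
  assumes "odd j" "a < 2^j" "t \<in> {1,5,6,7::nat}"
  shows "inD (a + 2^j * t) \<longleftrightarrow> Q (w j a)"
proof -
  have par: "c0 (w j a) + c1 (w j a) = j" by (rule c01_w)
  have s3: "Suc (j+2) = j+3" by simp
  have ne: "c0 (w j a) \<noteq> c1 (w j a)" using par assms(1) by (metis mult_2 dvd_triv_left)
  have Q0: "Q xs \<Longrightarrow> c0 xs \<le> c1 xs" for xs unfolding Q_def by (metis order_refl take_all)
  show ?thesis using assms(3)
  proof (elim insertE)
    assume t: "t = 1"
    have "bin_digits (a + 2^j*t) = w (Suc j) (a + 2^j*1)"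
      using assms unfolding t by (intro bd_w) (auto simp: power_add)
    also have "\<dots> = w j a @ [1]" using w_split[OF assms(2), of 1 1] t by simp
    finally have e: "bin_digits (a + 2^j*t) = w j a @ [1]" .
    show ?thesis using Q0[of "w j a"] unfolding inD_Q e Q_snoc c_snoc by auto
  next
    assume t: "t = 5"
    have "bin_digits (a + 2^j*t) = w (Suc (j+2)) (a + 2^j*5)"
      using assms unfolding t by (intro bd_w) (auto simp: power_add)
    also have "\<dots> = w j a @ [1,0,1]" by (simp only: s3 w_split[OF assms(2)] w3)
    finally have e: "bin_digits (a + 2^j*t) = ((w j a @ [1]) @ [0]) @ [1]" by simp
    show ?thesis using Q0[of "w j a"] par assms(1) unfolding inD_Q e Q_snoc
      using Q0[of "w j a"] ne by (simp only: c_snoc) linarith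
  next
    assume t: "t = 6"
    have "bin_digits (a + 2^j*t) = w (Suc (j+2)) (a + 2^j*6)"
      using assms unfolding t by (intro bd_w) (auto simp: power_add)
    also have "\<dots> = w j a @ [0,1,1]" by (simp only: s3 w_split[OF assms(2)] w3)
    finally have e: "bin_digits (a + 2^j*t) = ((w j a @ [0]) @ [1]) @ [1]" by simp
    show ?thesis using Q0[of "w j a"] par assms(1) unfolding inD_Q e Q_snoc
      using Q0[of "w j a"] ne by (simp only: c_snoc) linarith
  next
    assume t: "t = 7"
    have "bin_digits (a + 2^j*t) = w (Suc (j+2)) (a + 2^j*7)"
      using assms unfolding t by (intro bd_w) (auto simp: power_add)
    also have "\<dots> = w j a @ [1,1,1]" by (simp only: s3 w_split[OF assms(2)] w3)
    finally have e: "bin_digits (a + 2^j*t) = ((w j a @ [1]) @ [1]) @ [1]" by simp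
    show ?thesis using Q0[of "w j a"] par assms(1) unfolding inD_Q e Q_snoc
      using Q0[of "w j a"] ne by (simp only: c_snoc) linarith
  qed simp
qed

lemma w_ones: "w j (2^j - 1) = replicate j 1"
proof (induction j)
  case 0
  then show ?case by simp
next
  case (Suc j)
  have o: "(1::nat) \<le> 2^j" by simp
  have e2: "2*(2^j - 1) = 2*2^j - (2::nat)" by (simp add: diff_mult_distrib2)
  have e: "(2::nat)^Suc j - 1 = 2*(2^j-1) + 1" using o e2 by (simp only: power_Suc)
  have m: "(2^Suc j - 1::nat) mod 2 = 1" unfolding e by simp
  have d: "(2^Suc j - 1::nat) div 2 = 2^j - 1" unfolding e by simp
  show ?case using Suc.IH m d by simp
qed

lemma Q_ones: "Q (replicate j 1)"
  unfolding Q_def c0_def c1_def by simp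

theorem proposition8:
  fixes n :: nat
  assumes "even n" and "n \<ge> 6"
  defines "A \<equiv> (\<lambda>x. x + 2 ^ (n - 1)) ` E (n - 2)"
      and "B \<equiv> (\<lambda>x. x + 5 * 2 ^ (n - 3)) ` E (n - 2)"
      and "C \<equiv> (\<lambda>x. x + 3 * 2 ^ (n - 2)) ` E (n - 2)"
  shows "A \<union> B \<union> C \<subseteq> E n
    \<and> card (A \<union> B \<union> C) = 3 * card (E (n - 2))
    \<and> (\<forall>x \<in> E n - (A \<union> B \<union> C). \<forall>y \<in> A \<union> B \<union> C. x < y)
    \<and> (\<forall>a \<in> A. \<forall>b \<in> B. a < b) \<and> (\<forall>b \<in> B. \<forall>c \<in> C. b < c)
    \<and> Mn n \<in> C \<and> (\<forall>c \<in> C. c \<le> Mn n)"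
proof -
  define j where "j = n - 3"
  have nj: "n = j + 3" using assms(2) j_def by simp
  have oj: "odd j" using assms(1) nj by simp
  have pj: "(0::nat) < 2^j" by simp
  have p1: "2^(n-1) = 4*(2::nat)^j" using nj by (simp add: power_add)
  have p2: "5*2^(n-3) = 5*(2::nat)^j" using nj by simp
  have p3: "3*2^(n-2) = 6*(2::nat)^j" using nj by (simp add: power_add)
  have pn: "(2::nat)^n = 8*2^j" using nj by (simp add: power_add)
  have pn1: "(2::nat)^(n-1) = 4*2^j" using p1 .
  have pn2: "(2::nat)^(n-2) = 2*2^j" using nj by (simp add: power_add)
  define F where "F = {a. a < 2^j \<and> Q (w j a)}"
  have finF: "finite F" unfolding F_def by simp
  have E2: "E (n-2) = (\<lambda>a. a + 2^j) ` F"
  proof (intro set_eqI iffI)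
    fix m assume "m \<in> E (n-2)"
    then have m: "inD m" "2^j \<le> m" "m < 2*2^j"
      unfolding E_def Mn_def using pn2 nj pj by auto
    define a where "a = m - 2^j"
    have a: "a < 2^j" "m = a + 2^j*1" using m a_def by auto
    have "Q (w j a)" using key[OF oj a(1), of 1] a(2) m(1) by simp
    then show "m \<in> (\<lambda>a. a + 2^j) ` F" using a unfolding F_def by auto
  next
    fix m assume "m \<in> (\<lambda>a. a + 2^j) ` F"
    then obtain a where a: "a < 2^j" "Q (w j a)" "m = a + 2^j" unfolding F_def by auto
    have "inD m" using key[OF oj a(1), of 1] a by simp
    then show "m \<in> E (n-2)" unfolding E_def Mn_def using pn2 nj a by auto
  qed
  have En: "m \<in> E n \<longleftrightarrow> inD m \<and> 4*2^j \<le> m \<and> m < 8*2^j" for m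
    unfolding E_def Mn_def using pn pn1 pj by auto
  have memt: "a + 2^j*t \<in> E n \<longleftrightarrow> a \<in> F" if "a < 2^j" "t \<in> {5,6,7}" for a t
  proof -
    have "4*2^j \<le> a + 2^j*t \<and> a + 2^j*t < 8*(2::nat)^j" using that by auto
    then show ?thesis using key[OF oj that(1), of t] that unfolding En F_def by auto
  qed
  have A: "A = (\<lambda>a. a + 2^j*5) ` F" unfolding A_def E2 image_image p1
    by (rule image_cong) auto
  have B: "B = (\<lambda>a. a + 2^j*6) ` F" unfolding B_def E2 image_image p2
    by (rule image_cong) auto
  have C: "C = (\<lambda>a. a + 2^j*7) ` F" unfolding C_def E2 image_image p3
    by (rule image_cong) auto
  have Flt: "a \<in> F \<Longrightarrow> a < 2^j" for a unfolding F_def by simp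
  have s1: "A \<union> B \<union> C \<subseteq> E n"
    unfolding A B C using memt Flt by auto
  have cA: "card A = card F" unfolding A by (rule card_image) (simp add: inj_on_def)
  have cB: "card B = card F" unfolding B by (rule card_image) (simp add: inj_on_def)
  have cC: "card C = card F" unfolding C by (rule card_image) (simp add: inj_on_def)
  have cE: "card (E (n-2)) = card F" unfolding E2 by (rule card_image) (simp add: inj_on_def)
  have AB: "\<forall>a \<in> A. \<forall>b \<in> B. a < b" unfolding A B using Flt
    by (fastforce dest: Flt)
  have BC: "\<forall>b \<in> B. \<forall>c \<in> C. b < c" unfolding B C using Flt
    by (fastforce dest: Flt)
  have AC: "\<forall>a \<in> A. \<forall>c \<in> C. a < c" unfolding A C using Flt
    by (fastforce dest: Flt)
  have fin: "finite A" "finite B" "finite C" unfolding A B C using finF by auto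
  have card: "card (A \<union> B \<union> C) = 3 * card (E (n - 2))"
  proof -
    have d1: "A \<inter> B = {}" using AB by fastforce
    have d2: "(A \<union> B) \<inter> C = {}" using AC BC by fastforce
    have "card (A \<union> B \<union> C) = card (A \<union> B) + card C"
      using d2 fin by (intro card_Un_disjoint) auto
    also have "\<dots> = card A + card B + card C" using d1 fin by (simp add: card_Un_disjoint)
    finally show ?thesis using cA cB cC cE by simp
  qed
  have low: "y \<in> A \<union> B \<union> C \<Longrightarrow> 5*2^j \<le> y" for y unfolding A B C by auto
  have s3: "\<forall>x \<in> E n - (A \<union> B \<union> C). \<forall>y \<in> A \<union> B \<union> C. x < y"
  proof (intro ballI)
    fix x y assume x: "x \<in> E n - (A \<union> B \<union> C)" and y: "y \<in> A \<union> B \<union> C"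
    show "x < y"
    proof (rule ccontr)
      assume "\<not> x < y"
      then have x5: "5*2^j \<le> x" using low[OF y] by simp
      have x8: "x < 8*2^j" using x En by auto
      define t where "t = x div 2^j"
      define a where "a = x mod 2^j"
      have xa: "x = a + 2^j*t" unfolding a_def t_def by simp
      have at: "a < 2^j" unfolding a_def by simp
      have "5 \<le> t" unfolding t_def using x5 pj by (simp add: less_eq_div_iff_mult_less_eq mult.commute)
      moreover have "t < 8" unfolding t_def using x8 pj by (simp add: div_less_iff_less_mult mult.commute)
      ultimately have tt: "t \<in> {5,6,7}" by auto
      have "a \<in> F" using memt[OF at tt] x xa by auto
      then have "x \<in> A \<union> B \<union> C" unfolding A B C xa using tt by auto
      then show False using x by auto
    qed
  qed
  have mn: "Mn n = (2^j - 1) + 2^j*7" unfolding Mn_def pn using pj by simp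
  have "2^j - 1 \<in> F" unfolding F_def using w_ones Q_ones pj by simp
  then have s6: "Mn n \<in> C" unfolding C mn by blast
  have s7: "\<forall>c \<in> C. c \<le> Mn n" unfolding C mn using Flt by fastforce
  show ?thesis using s1 card s3 AB BC s6 s7 by blast
qed

end
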